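(* Let $\mathcal{H}^c_{A_{n-1}}$ be the degenerate affine Hecke–Clifford algebra of type $A_{n-1}$. If $\lambda$ is a partition of $n$ having at least one even part and $w\in S_n$ has cycle type $\lambda$, then $w\in[\mathcal{H}^c_{A_{n-1}},\mathcal{H}^c_{A_{n-1}}]$.
   Context: $\mathcal{H}^c_{A_{n-1}}$ (parameter $u\in\mathbb{C}$) is the $\mathbb{C}$-algebra generated by commuting $x_1,\dots,x_n$, Clifford generators $c_1,\dots,c_n$ ($c_i^2=1$, $c_ic_j=-c_jc_i$ for $i\ne j$) and $S_n$ (simple reflections $s_i=(i,i+1)$), with $\mathbb{C}[x]$, the Clifford algebra and $\mathbb{C}S_n$ subalgebras and relations $x_ic_i=-c_ix_i$, $x_ic_j=c_jx_i$ ($i\ne j$), $\sigma c_i=c_{\sigma(i)}\sigma$ ($\sigma\in S_n$), $x_{i+1}s_i-s_ix_i=u(1-c_{i+1}c_i)$, $x_js_i=s_ix_j$ ($j\ne i,i+1$). $[H,H]$ is the linear span of all $hh'-h'h$. *)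

theory Defs
  imports Complex_Main "HOL-Library.Multiset" "HOL-Combinatorics.Permutations" "HOL-Combinatorics.Orbits"
begin

text \<open>A complex algebra structure on a unital ring 'a: a unital ring homomorphism
  iota from the complex numbers into the centre of 'a; scalar multiplication is
  z . a = iota z * a.\<close>
definition complex_algebra_str :: "(complex \<Rightarrow> 'a::ring_1) \<Rightarrow> bool" where
  "complex_algebra_str \<iota> \<longleftrightarrow>
     \<iota> 1 = 1 \<and> (\<forall>z w. \<iota> (z + w) = \<iota> z + \<iota> w) \<and> (\<forall>z w. \<iota> (z * w) = \<iota> z * \<iota> w)
     \<and> (\<forall>z a. \<iota> z * a = a * \<iota> z)"

inductive_set commutator_span :: "(complex \<Rightarrow> 'a::ring_1) \<Rightarrow> 'a set" for \<iota> where
  zero: "0 \<in> commutator_span \<iota>"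
| comm: "h * h' - h' * h \<in> commutator_span \<iota>"
| add: "a \<in> commutator_span \<iota> \<Longrightarrow> b \<in> commutator_span \<iota> \<Longrightarrow> a + b \<in> commutator_span \<iota>"
| smult: "a \<in> commutator_span \<iota> \<Longrightarrow> \<iota> z * a \<in> commutator_span \<iota>"

text \<open>Defining relations of the degenerate affine Hecke-Clifford algebra of type A_{n-1}
  with parameter u, realised inside a complex algebra 'a: generators x i, c i (1 \<le> i \<le> n)
  and the image T sigma of each permutation sigma of {1..n}.\<close>
definition hecke_clifford_rel ::
  "nat \<Rightarrow> complex \<Rightarrow> (complex \<Rightarrow> 'a::ring_1) \<Rightarrow> (nat \<Rightarrow> 'a) \<Rightarrow> (nat \<Rightarrow> 'a) \<Rightarrow> ((nat \<Rightarrow> nat) \<Rightarrow> 'a) \<Rightarrow> bool"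
where
  "hecke_clifford_rel n u \<iota> x c T \<longleftrightarrow>
     (\<forall>i\<in>{1..n}. \<forall>j\<in>{1..n}. x i * x j = x j * x i)
   \<and> (\<forall>i\<in>{1..n}. c i * c i = 1)
   \<and> (\<forall>i\<in>{1..n}. \<forall>j\<in>{1..n}. i \<noteq> j \<longrightarrow> c i * c j = - (c j * c i))
   \<and> T id = 1
   \<and> (\<forall>\<sigma> \<tau>. \<sigma> permutes {1..n} \<longrightarrow> \<tau> permutes {1..n} \<longrightarrow> T (\<sigma> \<circ> \<tau>) = T \<sigma> * T \<tau>)
   \<and> (\<forall>i\<in>{1..n}. x i * c i = - (c i * x i))
   \<and> (\<forall>i\<in>{1..n}. \<forall>j\<in>{1..n}. i \<noteq> j \<longrightarrow> x i * c j = c j * x i)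
   \<and> (\<forall>\<sigma>. \<sigma> permutes {1..n} \<longrightarrow> (\<forall>i\<in>{1..n}. T \<sigma> * c i = c (\<sigma> i) * T \<sigma>))
   \<and> (\<forall>i. 1 \<le> i \<and> i < n \<longrightarrow>
        x (i+1) * T (transpose i (i+1)) - T (transpose i (i+1)) * x i
          = \<iota> u * (1 - c (i+1) * c i))
   \<and> (\<forall>i. 1 \<le> i \<and> i < n \<longrightarrow> (\<forall>j\<in>{1..n}. j \<noteq> i \<and> j \<noteq> i+1 \<longrightarrow>
        x j * T (transpose i (i+1)) = T (transpose i (i+1)) * x j))"

definition cycle_type :: "nat \<Rightarrow> (nat \<Rightarrow> nat) \<Rightarrow> nat multiset" where
  "cycle_type n w = image_mset card (mset_set ((\<lambda>i. orbit w i) ` {1..n}))"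

definition is_partition :: "nat multiset \<Rightarrow> nat \<Rightarrow> bool" where
  "is_partition lam n \<longleftrightarrow> sum_mset lam = n \<and> (\<forall>p\<in>#lam. p > 0)"

end

theory Submission
  imports Defs
begin

lemma prod_rev_inv:
  fixes c :: "nat \<Rightarrow> 'a::ring_1"
  assumes "\<forall>a\<in>set L. c a * c a = 1"
  shows "prod_list (map c L) * prod_list (map c (rev L)) = 1"
  using assms
proof (induction L)
  case Nil then show ?case by simp
next
  case (Cons a L)
  have "prod_list (map c (a#L)) * prod_list (map c (rev (a#L)))
        = c a * (prod_list (map c L) * prod_list (map c (rev L))) * c a"
    by (simp add: mult.assoc)
  also have "\<dots> = 1" using Cons by simp
  finally show ?case .
qed

lemma anticomm_list:
  fixes c :: "nat \<Rightarrow> 'a::ring_1"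
  assumes "\<forall>a\<in>set L. c i * c a = - (c a * c i)"
  shows "c i * prod_list (map c L) =
     (if even (length L) then prod_list (map c L) * c i else - (prod_list (map c L) * c i))"
  using assms
proof (induction L)
  case Nil then show ?case by simp
next
  case (Cons a L)
  have "c i * prod_list (map c (a#L)) = (c i * c a) * prod_list (map c L)"
    by (simp add: mult.assoc)
  also have "\<dots> = - (c a * (c i * prod_list (map c L)))" using Cons.prems by (simp add: mult.assoc)
  also have "\<dots> = (if even (length (a#L)) then prod_list (map c (a#L)) * c i
                  else - (prod_list (map c (a#L)) * c i))"
    using Cons by (simp add: mult.assoc)
  finally show ?case .
qed

lemma T_shift:
  fixes c :: "nat \<Rightarrow> 'a::ring_1"
  assumes "\<forall>a\<in>set L. t * c a = c (w a) * t"
  shows "t * prod_list (map c L) = prod_list (map c (map w L)) * t"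
  using assms
proof (induction L)
  case Nil then show ?case by simp
next
  case (Cons a L)
  have "t * prod_list (map c (a#L)) = (t * c a) * prod_list (map c L)"
    by (simp add: mult.assoc)
  also have "\<dots> = c (w a) * (t * prod_list (map c L))" using Cons.prems by (simp add: mult.assoc)
  also have "\<dots> = prod_list (map c (map w (a#L))) * t" using Cons by (simp add: mult.assoc)
  finally show ?case .
qed

lemma funpow_permutes_in:
  assumes "w permutes S" "i \<in> S" shows "(w ^^ k) i \<in> S"
  using assms by (induction k) (auto simp: permutes_in_image)

theorem proposition3p3p1:
  fixes n :: nat and u :: complex and \<iota> :: "complex \<Rightarrow> 'a::ring_1"
    and x c :: "nat \<Rightarrow> 'a" and T :: "(nat \<Rightarrow> nat) \<Rightarrow> 'a"
    and lam :: "nat multiset" and w :: "nat \<Rightarrow> nat"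
  assumes "complex_algebra_str \<iota>"
    and "hecke_clifford_rel n u \<iota> x c T"
    and "is_partition lam n"
    and "\<exists>p\<in>#lam. even p"
    and "w permutes {1..n}"
    and "cycle_type n w = lam"
  shows "T w \<in> commutator_span \<iota>"
proof -
  note ca = assms(1)[unfolded complex_algebra_str_def]
  note hr = assms(2)[unfolded hecke_clifford_rel_def]
  have cc: "\<And>i. i \<in> {1..n} \<Longrightarrow> c i * c i = 1" using hr by blast
  have canti: "\<And>i j. i \<in> {1..n} \<Longrightarrow> j \<in> {1..n} \<Longrightarrow> i \<noteq> j \<Longrightarrow> c i * c j = - (c j * c i)"
    using hr by blast
  have Tc: "\<And>i. i \<in> {1..n} \<Longrightarrow> T w * c i = c (w i) * T w" using hr assms(5) by blast
  obtain p where p: "p \<in># lam" "even p" using assms(4) by blast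
  have "p \<in> card ` ((\<lambda>i. orbit w i) ` {1..n})"
    using p(1) assms(6) unfolding cycle_type_def
    by (metis finite_atLeastAtMost finite_imageI finite_set_mset_mset_set set_image_mset)
  then obtain i where i: "i \<in> {1..n}" "card (orbit w i) = p" by auto
  have ppos: "p > 0" using p(1) assms(3) unfolding is_partition_def by blast
  have perm: "permutation w" using assms(5) permutation_permutes by blast
  have self: "i \<in> orbit w i" using permutation_self_in_orbit[OF perm] .
  define m where "m = funpow_dist1 w i i"
  have orb: "orbit w i = (\<lambda>k. (w ^^ k) i) ` {0..<m}"
    unfolding m_def by (rule orbit_conv_funpow_dist1[OF self])
  have "card (orbit w i) = m"
    unfolding orb m_def using inj_on_funpow_dist1[OF self] by (simp add: card_image)
  with i p ppos have mev: "even m" and mpos: "m > 0" by auto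
  have wm: "(w ^^ m) i = i" unfolding m_def by (rule funpow_dist1_prop[OF self])
  have nz: "\<And>k. 0 < k \<Longrightarrow> k < m \<Longrightarrow> (w ^^ k) i \<noteq> i"
    unfolding m_def by (rule funpow_dist1_least)
  define D where "D = map (\<lambda>k. (w ^^ k) i) [1..<m]"
  define L where "L = i # D"
  have Lin: "\<forall>a\<in>set L. a \<in> {1..n}"
    unfolding L_def D_def using i funpow_permutes_in[OF assms(5)] by auto
  have Lm: "L = map (\<lambda>k. (w ^^ k) i) [0..<m]"
    unfolding L_def D_def using mpos by (simp add: upt_conv_Cons)
  have mapw: "map w L = D @ [i]"
  proof -
    have "map w L = map (\<lambda>k. (w ^^ Suc k) i) [0..<m]" unfolding Lm by simp
    also have "\<dots> = map (\<lambda>k. (w ^^ k) i) (map Suc [0..<m])"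
      by simp
    also have "map Suc [0..<m] = [1..<Suc m]" by (simp add: map_Suc_upt)
    also have "map (\<lambda>k. (w ^^ k) i) [1..<Suc m] = map (\<lambda>k. (w ^^ k) i) ([1..<m] @ [m])"
      using mpos by simp
    also have "\<dots> = D @ [i]" unfolding D_def using mpos wm by simp
    finally show ?thesis .
  qed
  have inotD: "\<forall>a\<in>set D. c i * c a = - (c a * c i)"
  proof
    fix a assume "a \<in> set D"
    then obtain k where k: "0 < k" "k < m" "a = (w ^^ k) i"
    proof -
      from \<open>a \<in> set D\<close> obtain k where "k \<in> set [1..<m]" "a = (w ^^ k) i"
        unfolding D_def by (auto simp only: set_map)
      then have "0 < k" "k < m" by auto
      then show ?thesis using that[of k] \<open>a = _\<close> by blast
    qed
    then show "c i * c a = - (c a * c i)"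
      using canti[OF i(1)] nz[OF k(1,2)] funpow_permutes_in[OF assms(5) i(1)] by metis
  qed
  have lenD: "length D = m - 1" unfolding D_def by simp
  have odd: "\<not> even (length D)" using lenD mev mpos by auto
  define C where "C = prod_list (map c L)"
  define R where "R = prod_list (map c (rev L))"
  define P where "P = prod_list (map c D)"
  have CR: "C * R = 1" unfolding C_def R_def using prod_rev_inv Lin cc by blast
  have RC: "R * C = 1"
    using prod_rev_inv[of "rev L" c] Lin cc unfolding C_def R_def by simp
  have TC: "T w * C = - (C * T w)"
  proof -
    have "T w * C = prod_list (map c (map w L)) * T w"
      unfolding C_def by (rule T_shift) (use Lin Tc in blast)
    also have "\<dots> = P * c i * T w" unfolding mapw P_def by simp
    also have "\<dots> = - (c i * P * T w)"
      using anticomm_list[OF inotD] odd unfolding P_def by simp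
    also have "\<dots> = - (C * T w)" unfolding C_def L_def P_def by simp
    finally show ?thesis .
  qed
  have key: "(T w * C) * R - R * (T w * C) = T w + T w"
  proof -
    have "(T w * C) * R = T w" using CR by (simp add: mult.assoc)
    moreover have "R * (T w * C) = - T w" using TC RC by (simp add: mult.assoc[symmetric])
    ultimately show ?thesis by simp
  qed
  have "\<iota> (1/2) * (T w + T w) = T w"
  proof -
    have "\<iota> (1/2) * (T w + T w) = (\<iota> (1/2) + \<iota> (1/2)) * T w" by (simp add: algebra_simps)
    also have "\<iota> (1/2) + \<iota> (1/2) = \<iota> (1/2 + 1/2)" using ca by metis
    also have "(1/2 + 1/2 :: complex) = 1" by simp
    finally show ?thesis using ca by simp
  qed
  moreover have "\<iota> (1/2) * (T w + T w) \<in> commutator_span \<iota>"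
    using commutator_span.smult[OF commutator_span.comm[of "T w * C" R], where z="1/2"] key by simp
  ultimately show ?thesis by simp
qed

end
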